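(* Let $(V,\omega)$ be a $2n$-dimensional real symplectic space, $L_1,L_2,L_3\in\Lambda(V,\omega)$, $\psi:[0,T]\to\mathrm{Sp}(V,\omega)$ of class $\mathscr C^1$ with $\psi(0)=\mathrm{Id}$, and $\ell_i(t)=\psi(t)L_i$ for $i=1,2$. Assume: (1) $\ell_2$ is an $L_3$-plus curve; (2) $\iota(L_1,L_2,L_3)=n-\dim(L_1\cap L_2)$; (3) $\ell_1(t)\cap L_3=\{0\}$ for every $t\in[0,T]$. Then $\ell_2(t)\cap L_3=\{0\}$ for every $t\in[0,T]$.
   Context: $\Lambda(V,\omega)$ is the Lagrangian Grassmannian of $(V,\omega)$. For $L_0\in\Lambda(V,\omega)$ and a $\mathscr C^1$ path $\ell$ in $\Lambda(V,\omega)$, a crossing is an instant $t_0$ with $\ell(t_0)\cap L_0\ne\{0\}$; the crossing form on $\ell(t_0)\cap L_0$ is $\Gamma(\ell,L_0,t_0)[v]=\frac{d}{dt}|_{t=t_0}\omega(v,w(t))$ with $w(t)$ the unique vector in a fixed Lagrangian $W$ transversal to $\ell(t_0)$ such that $v+w(t)\in\ell(t)$. The curve $\ell$ is an $L_0$-plus curve if at each crossing the crossing form is positive definite. Triple index: for $\alpha,\beta,\gamma\in\Lambda(V,\omega)$ let $Q(\alpha,\beta;\gamma)$ be the quadratic form on $\alpha\cap(\beta+\gamma)$ given by $Q(\alpha,\beta;\gamma)(x)=\omega(y,z)$ where $x=y+z$ with $y\in\beta$, $z\in\gamma$ (independent of the decomposition); then $\iota(\alpha,\beta,\gamma)=n_+\big(Q(\alpha,\beta;\gamma)\big)+\dim(\alpha\cap\gamma)-\dim(\alpha\cap\beta\cap\gamma)$,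 where $n_+$ is the positive inertia index. *)

theory Defs
  imports "HOL-Analysis.Analysis"
begin

definition symplectic_form :: "('v::euclidean_space \<Rightarrow> 'v \<Rightarrow> real) \<Rightarrow> bool" where
  "symplectic_form \<omega> \<longleftrightarrow>
     (\<forall>x. linear (\<omega> x)) \<and> (\<forall>y. linear (\<lambda>x. \<omega> x y)) \<and>
     (\<forall>x y. \<omega> x y = - \<omega> y x) \<and>
     (\<forall>x. (\<forall>y. \<omega> x y = 0) \<longrightarrow> x = 0)"

definition symp_orth :: "('v::euclidean_space \<Rightarrow> 'v \<Rightarrow> real) \<Rightarrow> 'v set \<Rightarrow> 'v set" where
  "symp_orth \<omega> L = {x. \<forall>y\<in>L. \<omega> x y = 0}"

definition lagrangian :: "('v::euclidean_space \<Rightarrow> 'v \<Rightarrow> real) \<Rightarrow> 'v set \<Rightarrow> bool" where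
  "lagrangian \<omega> L \<longleftrightarrow> subspace L \<and> L = symp_orth \<omega> L"

definition symplectic_map :: "('v::euclidean_space \<Rightarrow> 'v \<Rightarrow> real) \<Rightarrow> ('v \<Rightarrow> 'v) \<Rightarrow> bool" where
  "symplectic_map \<omega> A \<longleftrightarrow> linear A \<and> bij A \<and> (\<forall>x y. \<omega> (A x) (A y) = \<omega> x y)"

text \<open>A path of linear maps is C^1 on I (for finite dimension equivalently: each
t \<mapsto> A t v is C^1, i.e. the matrix entries are C^1).\<close>

definition C1_path_on :: "real set \<Rightarrow> (real \<Rightarrow> 'v::euclidean_space \<Rightarrow> 'v) \<Rightarrow> bool" where
  "C1_path_on I A \<longleftrightarrow>
     (\<exists>A'. (\<forall>t\<in>I. \<forall>v. ((\<lambda>s. A s v) has_vector_derivative A' t v) (at t within I)) \<and>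
           (\<forall>v. continuous_on I (\<lambda>t. A' t v)))"

text \<open>Crossing form: for v in l(t0) \<inter> L0, w(t) is the unique vector of a fixed Lagrangian W
transversal to l(t0) with v + w(t) \<in> l(t); Gamma[v] = d/dt omega(v, w(t)) at t0.\<close>

definition crossing_vec ::
  "'v::euclidean_space set \<Rightarrow> (real \<Rightarrow> 'v set) \<Rightarrow> 'v \<Rightarrow> real \<Rightarrow> 'v" where
  "crossing_vec W l v t = (THE w. w \<in> W \<and> v + w \<in> l t)"

definition plus_curve ::
  "('v::euclidean_space \<Rightarrow> 'v \<Rightarrow> real) \<Rightarrow> 'v set \<Rightarrow> real set \<Rightarrow> (real \<Rightarrow> 'v set) \<Rightarrow> bool" where
  "plus_curve \<omega> L0 I l \<longleftrightarrow>
     (\<forall>t0\<in>I. l t0 \<inter> L0 \<noteq> {0} \<longrightarrow>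
        (\<exists>W. lagrangian \<omega> W \<and> W \<inter> l t0 = {0} \<and>
           (\<forall>v\<in>l t0 \<inter> L0. v \<noteq> 0 \<longrightarrow>
              (\<exists>D>0. ((\<lambda>t. \<omega> v (crossing_vec W l v t)) has_real_derivative D) (at t0 within I)))))"

definition Qform ::
  "('v::euclidean_space \<Rightarrow> 'v \<Rightarrow> real) \<Rightarrow> 'v set \<Rightarrow> 'v set \<Rightarrow> 'v \<Rightarrow> real" where
  "Qform \<omega> \<beta> \<gamma> x = (let p = (SOME p. fst p \<in> \<beta> \<and> snd p \<in> \<gamma> \<and> x = fst p + snd p)
                      in \<omega> (fst p) (snd p))"

definition pos_inertia :: "('v::euclidean_space \<Rightarrow> real) \<Rightarrow> 'v set \<Rightarrow> nat" where
  "pos_inertia Q S = Max {dim U | U. subspace U \<and> U \<subseteq> S \<and> (\<forall>x\<in>U. x \<noteq> 0 \<longrightarrow> Q x > 0)}"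

definition triple_index ::
  "('v::euclidean_space \<Rightarrow> 'v \<Rightarrow> real) \<Rightarrow> 'v set \<Rightarrow> 'v set \<Rightarrow> 'v set \<Rightarrow> nat" where
  "triple_index \<omega> \<alpha> \<beta> \<gamma> =
     pos_inertia (Qform \<omega> \<beta> \<gamma>) (\<alpha> \<inter> (\<beta> + \<gamma>)) + dim (\<alpha> \<inter> \<gamma>) - dim (\<alpha> \<inter> \<beta> \<inter> \<gamma>)"

end

theory Submission
  imports Defs
begin

lemma lag_sub: "lagrangian \<omega> L \<Longrightarrow> subspace L"
  by (simp add: lagrangian_def)

lemma lag_iso: "lagrangian \<omega> L \<Longrightarrow> x \<in> L \<Longrightarrow> y \<in> L \<Longrightarrow> \<omega> x y = 0"
  unfolding lagrangian_def symp_orth_def by blast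

lemma lag_max: "lagrangian \<omega> L \<Longrightarrow> (\<And>y. y \<in> L \<Longrightarrow> \<omega> x y = 0) \<Longrightarrow> x \<in> L"
  unfolding lagrangian_def symp_orth_def by blast

locale csetup =
  fixes \<omega> :: "'v::euclidean_space \<Rightarrow> 'v \<Rightarrow> real"
    and n :: nat and T :: real
    and L1 L2 L3 :: "'v set"
    and \<psi> :: "real \<Rightarrow> 'v \<Rightarrow> 'v"
  assumes symp: "symplectic_form \<omega>"
    and dimV: "DIM('v) = 2 * n"
    and lag1: "lagrangian \<omega> L1" and lag2: "lagrangian \<omega> L2" and lag3: "lagrangian \<omega> L3"
    and psi_sp: "\<forall>t\<in>{0..T}. symplectic_map \<omega> (\<psi> t)"
    and psi_C1: "C1_path_on {0..T} \<psi>"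
    and psi0: "\<psi> 0 = id"
    and transv: "\<forall>t\<in>{0..T}. \<psi> t ` L1 \<inter> L3 = {0}"
    and T0: "0 \<le> T"
begin

lemma bil: "bilinear \<omega>"
  using symp unfolding symplectic_form_def bilinear_def by blast

lemma bbil: "bounded_bilinear \<omega>"
  using bil bilinear_conv_bounded_bilinear by blast

sublocale bb: bounded_bilinear \<omega> by (rule bbil)

lemma skew: "\<omega> x y = - \<omega> y x"
  using symp unfolding symplectic_form_def by blast

lemma self0[simp]: "\<omega> x x = 0"
  using skew[of x x] by simp

lemma nondeg: "(\<And>y. \<omega> x y = 0) \<Longrightarrow> x = 0"
  using symp unfolding symplectic_form_def by blast

lemma dim_orth: "subspace L \<Longrightarrow> dim (symp_orth \<omega> L) + dim L = 2 * n"
proof -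
  assume L: "subspace L"
  define J where "J y = (\<Sum>i\<in>Basis. \<omega> i y *\<^sub>R i)" for y
  have inner: "x \<bullet> J y = \<omega> x y" for x y
  proof -
    have "x \<bullet> J y = (\<Sum>i\<in>Basis. \<omega> i y * (x \<bullet> i))"
      by (simp add: J_def inner_sum_right)
    also have "\<dots> = \<omega> (\<Sum>i\<in>Basis. (x \<bullet> i) *\<^sub>R i) y"
      by (simp add: bb.sum_left bb.scaleR_left mult.commute)
    also have "\<dots> = \<omega> x y" by (simp add: euclidean_representation)
    finally show ?thesis .
  qed
  have linJ: "linear J"
    unfolding J_def by (intro linearI) (auto simp: bb.add_right bb.scaleR_right sum.distrib scaleR_add_left scaleR_sum_right)
  have injJ: "inj J"
  proof (rule injI)
    fix a b assume "J a = J b"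
    then have "\<omega> x (a - b) = 0" for x
      using inner[of x a] inner[of x b] by (simp add: bb.diff_right)
    then have "\<omega> (a - b) x = 0" for x using skew[of "a - b" x] by simp
    then show "a = b" using nondeg[of "a - b"] by simp
  qed
  have eq: "symp_orth \<omega> L = {y \<in> UNIV. \<forall>x\<in>J ` L. orthogonal x y}"
    unfolding symp_orth_def orthogonal_def
    by (auto simp: inner[symmetric] inner_commute)
  have sJL: "subspace (J ` L)" by (rule linear_subspace_image[OF linJ L])
  have "dim {y \<in> UNIV. \<forall>x\<in>J ` L. orthogonal x y} + dim (J ` L) = dim (UNIV :: 'v set)"
    by (rule dim_subspace_orthogonal_to_vectors[OF sJL subspace_UNIV]) auto
  moreover have "dim (J ` L) = dim L"
    using dim_image_eq[OF linJ] injJ by (meson inj_on_subset subset_UNIV)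
  ultimately show ?thesis using eq dimV by simp
qed

lemma dim_lag: assumes L: "lagrangian \<omega> L" shows "dim L = n"
proof -
  have e: "symp_orth \<omega> L = L" using L unfolding lagrangian_def by blast
  show ?thesis using dim_orth[OF lag_sub[OF L]] unfolding e by simp
qed

lemma psi_lin: "t \<in> {0..T} \<Longrightarrow> linear (\<psi> t)"
  using psi_sp unfolding symplectic_map_def by blast

lemma psi_bij: "t \<in> {0..T} \<Longrightarrow> bij (\<psi> t)"
  using psi_sp unfolding symplectic_map_def by blast

lemma psi_inj: "t \<in> {0..T} \<Longrightarrow> inj (\<psi> t)"
  using psi_bij bij_is_inj by blast

lemma psi_om: "t \<in> {0..T} \<Longrightarrow> \<omega> (\<psi> t x) (\<psi> t y) = \<omega> x y"
  using psi_sp unfolding symplectic_map_def by blast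

lemma psi_lag: assumes t: "t \<in> {0..T}" and L: "lagrangian \<omega> L"
  shows "lagrangian \<omega> (\<psi> t ` L)"
  unfolding lagrangian_def
proof
  show "subspace (\<psi> t ` L)" by (rule linear_subspace_image[OF psi_lin[OF t] lag_sub[OF L]])
  show "\<psi> t ` L = symp_orth \<omega> (\<psi> t ` L)"
  proof
    show "\<psi> t ` L \<subseteq> symp_orth \<omega> (\<psi> t ` L)"
      using lag_iso[OF L] psi_om[OF t] unfolding symp_orth_def by auto
  next
    show "symp_orth \<omega> (\<psi> t ` L) \<subseteq> \<psi> t ` L"
    proof
      fix x assume x: "x \<in> symp_orth \<omega> (\<psi> t ` L)"
      obtain z where z: "x = \<psi> t z" using psi_bij[OF t] by (metis bij_pointE)
      have "\<omega> z y = 0" if "y \<in> L" for y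
        using x that psi_om[OF t, of z y] z unfolding symp_orth_def by auto
      then have "z \<in> L" using lag_max[OF L] by blast
      then show "x \<in> \<psi> t ` L" using z by blast
    qed
  qed
qed

lemma psi_dim: "t \<in> {0..T} \<Longrightarrow> lagrangian \<omega> L \<Longrightarrow> dim (\<psi> t ` L) = n"
  using psi_lag dim_lag by blast

lemma decomp:
  assumes A: "lagrangian \<omega> A" and B: "lagrangian \<omega> B" and AB: "A \<inter> B = {0}"
  shows "\<exists>a\<in>A. \<exists>b\<in>B. z = a + b"
proof -
  let ?S = "{x + y |x y. x \<in> A \<and> y \<in> B}"
  have sA: "subspace A" and sB: "subspace B" using A B lag_sub by auto
  have "dim ?S + dim (A \<inter> B) = dim A + dim B" by (rule dim_sums_Int[OF sA sB])
  then have "dim ?S = DIM('v)" using AB dim_lag[OF A] dim_lag[OF B] dimV by simp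
  then have "span ?S = UNIV" using dim_eq_full by blast
  moreover have "span ?S = ?S" using subspace_sums[OF sA sB] by (simp add: span_eq_iff)
  ultimately have "z \<in> ?S" by simp
  then show ?thesis by blast
qed

end

context csetup
begin

lemma psi_der: "\<exists>A'. \<forall>t\<in>{0..T}. \<forall>v. ((\<lambda>s. \<psi> s v) has_vector_derivative A' t v) (at t within {0..T})"
  using psi_C1 unfolding C1_path_on_def by blast

definition E :: "real \<Rightarrow> real \<Rightarrow> real" where
  "E s t = (\<Sum>i\<in>Basis. norm (\<psi> t i - \<psi> s i))"

lemma E_nonneg: "0 \<le> E s t"
  unfolding E_def by (simp add: sum_nonneg)

lemma E_bound:
  assumes s: "s \<in> {0..T}" and t: "t \<in> {0..T}"
  shows "norm (\<psi> t z - \<psi> s z) \<le> E s t * norm z"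
proof -
  have rep: "\<psi> r z = (\<Sum>i\<in>Basis. (z \<bullet> i) *\<^sub>R \<psi> r i)" if "r \<in> {0..T}" for r
  proof -
    have "\<psi> r z = \<psi> r (\<Sum>i\<in>Basis. (z \<bullet> i) *\<^sub>R i)" by (simp add: euclidean_representation)
    also have "\<dots> = (\<Sum>i\<in>Basis. (z \<bullet> i) *\<^sub>R \<psi> r i)"
      using psi_lin[OF that] by (simp add: linear_sum linear_scale)
    finally show ?thesis .
  qed
  have "\<psi> t z - \<psi> s z = (\<Sum>i\<in>Basis. (z \<bullet> i) *\<^sub>R (\<psi> t i - \<psi> s i))"
    using rep[OF t] rep[OF s] by (simp add: sum_subtractf scaleR_diff_right)
  also have "norm \<dots> \<le> (\<Sum>i\<in>Basis. norm ((z \<bullet> i) *\<^sub>R (\<psi> t i - \<psi> s i)))"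
    by (rule norm_sum)
  also have "\<dots> \<le> (\<Sum>i\<in>Basis. norm z * norm (\<psi> t i - \<psi> s i))"
    by (intro sum_mono) (auto intro: mult_right_mono Basis_le_norm)
  also have "\<dots> = E s t * norm z" by (simp add: E_def sum_distrib_left mult.commute)
  finally show ?thesis .
qed

lemma E_tendsto:
  assumes s: "s \<in> {0..T}"
  shows "(E s \<longlongrightarrow> 0) (at s within {0..T})"
proof -
  obtain A' where der: "\<forall>t\<in>{0..T}. \<forall>v. ((\<lambda>s. \<psi> s v) has_vector_derivative A' t v) (at t within {0..T})"
    using psi_der by blast
  have "((\<lambda>t. \<psi> t i) \<longlongrightarrow> \<psi> s i) (at s within {0..T})" for i
    using has_vector_derivative_continuous[OF der[rule_format, OF s]] continuous_within by blast
  then have "((\<lambda>t. norm (\<psi> t i - \<psi> s i)) \<longlongrightarrow> 0) (at s within {0..T})" for i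
    by (intro tendsto_norm_zero LIM_zero)
  then show ?thesis unfolding E_def[abs_def] by (intro tendsto_null_sum)
qed

lemma E_lip:
  assumes s: "s \<in> {0..T}"
  shows "\<exists>c. \<forall>\<^sub>F t in at s within {0..T}. E s t \<le> c * \<bar>t - s\<bar>"
proof -
  obtain A' where der: "\<forall>t\<in>{0..T}. \<forall>v. ((\<lambda>s. \<psi> s v) has_vector_derivative A' t v) (at t within {0..T})"
    using psi_der by blast
  have ev: "\<forall>\<^sub>F t in at s within {0..T}. norm (\<psi> t i - \<psi> s i) \<le> (norm (A' s i) + 1) * \<bar>t - s\<bar>" for i
  proof -
    have lim: "((\<lambda>y. (1 / norm (y - s)) *\<^sub>R (\<psi> y i - (\<psi> s i + (y - s) *\<^sub>R A' s i))) \<longlongrightarrow> 0) (at s within {0..T})"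
      using der[rule_format, OF s, of i] unfolding has_vector_derivative_def has_derivative_within by blast
    then have "\<forall>\<^sub>F y in at s within {0..T}. norm ((1 / norm (y - s)) *\<^sub>R (\<psi> y i - (\<psi> s i + (y - s) *\<^sub>R A' s i))) < 1"
      using order_tendstoD(2)[OF tendsto_norm_zero[OF lim], of 1] by simp
    moreover have "\<forall>\<^sub>F y in at s within {0..T}. y \<noteq> s" by (simp add: eventually_at_filter)
    ultimately show ?thesis
    proof eventually_elim
      case (elim y)
      define d where "d = A' s i"
      have ys: "\<bar>y - s\<bar> > 0" using elim(2) by simp
      have "norm (\<psi> y i - (\<psi> s i + (y - s) *\<^sub>R d)) < \<bar>y - s\<bar>"
        using elim(1) ys unfolding d_def by (simp add: divide_less_eq)
      moreover have "norm (\<psi> y i - \<psi> s i) \<le> norm (\<psi> y i - (\<psi> s i + (y - s) *\<^sub>R d)) + norm ((y - s) *\<^sub>R d)"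
        using norm_triangle_ineq[of "\<psi> y i - (\<psi> s i + (y - s) *\<^sub>R d)" "(y - s) *\<^sub>R d"]
        by (simp add: algebra_simps)
      moreover have "norm ((y - s) *\<^sub>R d) = \<bar>y - s\<bar> * norm d" by simp
      ultimately have "norm (\<psi> y i - \<psi> s i) \<le> \<bar>y - s\<bar> + \<bar>y - s\<bar> * norm d" by linarith
      then show ?case unfolding d_def by (simp add: algebra_simps)
    qed
  qed
  have "\<forall>\<^sub>F t in at s within {0..T}. \<forall>i\<in>Basis. norm (\<psi> t i - \<psi> s i) \<le> (norm (A' s i) + 1) * \<bar>t - s\<bar>"
    using ev by (intro eventually_ball_finite) auto
  then have "\<forall>\<^sub>F t in at s within {0..T}. E s t \<le> (\<Sum>i\<in>Basis. norm (A' s i) + 1) * \<bar>t - s\<bar>"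
    by eventually_elim (simp add: E_def sum_distrib_right sum_mono)
  then show ?thesis by blast
qed

lemma ev_in: "\<forall>\<^sub>F t in at s within S. t \<in> S"
  by (simp add: eventually_at_filter)

lemma omega_bound: "\<exists>K>0. \<forall>x y. \<bar>\<omega> x y\<bar> \<le> K * norm x * norm y"
  using bb.pos_bounded by (metis mult.commute mult.left_commute real_norm_def)

lemma psi_bound: assumes s: "s \<in> {0..T}"
  shows "\<exists>M>0. \<forall>t\<in>{0..T}. E s t \<le> 1 \<longrightarrow> (\<forall>z. norm (\<psi> t z) \<le> M * norm z)"
proof -
  obtain B where B: "B > 0" "\<And>x. norm (\<psi> s x) \<le> B * norm x"
    using linear_bounded_pos[OF psi_lin[OF s]] by blast
  have "norm (\<psi> t z) \<le> (B + 1) * norm z" if "t \<in> {0..T}" "E s t \<le> 1" for t z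
  proof -
    have "norm (\<psi> t z) \<le> norm (\<psi> s z) + norm (\<psi> t z - \<psi> s z)" by (rule norm_triangle_sub)
    also have "\<dots> \<le> B * norm z + E s t * norm z" using B(2) E_bound[OF s that(1)] by (intro add_mono) auto
    also have "\<dots> \<le> (B + 1) * norm z" using that(2) mult_left_le[of "E s t" "norm z"] by (simp add: algebra_simps)
    finally show ?thesis .
  qed
  then show ?thesis using B(1) by (intro exI[of _ "B + 1"]) auto
qed

end

lemma transv_const:
  fixes G :: "'a::euclidean_space \<Rightarrow> 'a"
  assumes lin: "linear G" and A: "subspace A" and B: "subspace B"
    and tr: "\<And>x b. x \<in> A \<Longrightarrow> b \<in> B \<Longrightarrow> G x + b = 0 \<Longrightarrow> x = 0 \<and> b = 0"
  shows "\<exists>e>0. \<forall>x\<in>A. \<forall>b\<in>B. e * (norm x + norm b) \<le> norm (G x + b)"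
proof -
  define K where "K = (A \<times> B) \<inter> {p. norm (fst p) + norm (snd p) = 1}"
  have scale: "(c *\<^sub>R x, c *\<^sub>R b) \<in> K" if "x \<in> A" "b \<in> B" "norm x + norm b \<noteq> 0" "c = 1 / (norm x + norm b)" for x b c
  proof -
    have c0: "c \<ge> 0" using that(4) by simp
    have "norm (c *\<^sub>R x) + norm (c *\<^sub>R b) = c * (norm x + norm b)" using c0
      by (simp add: algebra_simps)
    also have "\<dots> = 1" using that(3) by (simp add: that(4) field_simps)
    finally show ?thesis using that A B unfolding K_def by (auto intro: subspace_scale)
  qed
  show ?thesis
  proof (cases "K = {}")
    case True
    then have z0: "x = 0 \<and> b = 0" if "x \<in> A" "b \<in> B" for x b
      using scale[OF that] by (metis add_nonneg_eq_0_iff empty_iff norm_eq_zero norm_ge_zero)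
    have "1 * (norm x + norm b) \<le> norm (G x + b)" if "x \<in> A" "b \<in> B" for x b
      using z0[OF that] linear_0[OF lin] by simp
    then show ?thesis by (intro exI[of _ 1]) auto
  next
    case False
    have bK: "bounded K"
      unfolding bounded_iff
    proof (intro exI ballI)
      fix p assume "p \<in> K"
      then show "norm p \<le> 1" using norm_Pair_le[of "fst p" "snd p"] unfolding K_def by auto
    qed
    have cK: "closed K"
      unfolding K_def
      by (intro closed_Int closed_Times closed_subspace A B closed_Collect_eq continuous_intros)
    have cG: "continuous_on UNIV G" using lin by (simp add: linear_continuous_on linear_conv_bounded_linear)
    have "continuous_on K (\<lambda>p. G (fst p))"
      by (rule continuous_on_compose2[OF cG continuous_on_fst[OF continuous_on_id]]) auto
    then have cont: "continuous_on K (\<lambda>p. norm (G (fst p) + snd p))"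
      by (intro continuous_intros)
    obtain p0 where p0: "p0 \<in> K" "\<And>p. p \<in> K \<Longrightarrow> norm (G (fst p0) + snd p0) \<le> norm (G (fst p) + snd p)"
      using continuous_attains_inf[OF compact_eq_bounded_closed[THEN iffD2, OF conjI[OF bK cK]] False cont] by blast
    define e where "e = norm (G (fst p0) + snd p0)"
    have "e > 0"
    proof (rule ccontr)
      assume "\<not> e > 0"
      then have "G (fst p0) + snd p0 = 0" unfolding e_def by simp
      then have "fst p0 = 0 \<and> snd p0 = 0" using tr p0(1) unfolding K_def by auto
      then show False using p0(1) unfolding K_def by auto
    qed
    have "e * (norm x + norm b) \<le> norm (G x + b)" if x: "x \<in> A" and b: "b \<in> B" for x b
    proof (cases "norm x + norm b = 0")
      case True then show ?thesis by simp
    next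
      case nz: False
      define c where "c = 1 / (norm x + norm b)"
      have pos: "norm x + norm b > 0" using nz by (metis add_nonneg_nonneg less_eq_real_def norm_ge_zero)
      have c: "c > 0" using pos unfolding c_def by simp
      have "e \<le> norm (G (c *\<^sub>R x) + c *\<^sub>R b)"
        using p0(2)[OF scale[OF x b nz c_def]] unfolding e_def by simp
      also have "\<dots> = c * norm (G x + b)"
        using c lin by (simp add: linear_scale scaleR_add_right[symmetric])
      finally have "e \<le> c * norm (G x + b)" .
      then show ?thesis using pos unfolding c_def
        by (simp add: field_simps)
    qed
    then show ?thesis using \<open>e > 0\<close> by blast
  qed
qed


context csetup
begin

lemma unif:
  assumes s: "s \<in> {0..T}" and A: "subspace A" and B: "subspace B"
    and tr: "\<And>x b. x \<in> A \<Longrightarrow> b \<in> B \<Longrightarrow> \<psi> s x + b = 0 \<Longrightarrow> x = 0 \<and> b = 0"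
  shows "\<exists>C>0. (\<forall>x\<in>A. \<forall>b\<in>B. norm x + norm b \<le> C * norm (\<psi> s x + b)) \<and>
     (\<forall>\<^sub>F t in at s within {0..T}. \<forall>x\<in>A. \<forall>b\<in>B. norm x + norm b \<le> C * norm (\<psi> t x + b))"
proof -
  obtain e where e: "e > 0" "\<And>x b. x\<in>A \<Longrightarrow> b\<in>B \<Longrightarrow> e * (norm x + norm b) \<le> norm (\<psi> s x + b)"
    using transv_const[OF psi_lin[OF s] A B tr] by blast
  have key: "norm x + norm b \<le> (2/e) * N" if "e * (norm x + norm b) \<le> N + (e/2) * norm x" for x b N
  proof -
    have h1: "e * (norm x + norm b) = (e/2) * (norm x + norm b) + (e/2) * norm x + (e/2) * norm b"
      by (simp add: field_simps)
    have h2: "0 \<le> (e/2) * norm b" using e(1) by simp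
    have "(e/2) * (norm x + norm b) \<le> N"
      using that h1 h2 by linarith
    then show ?thesis using e(1) by (simp add: field_simps)
  qed
  have ev: "\<forall>\<^sub>F t in at s within {0..T}. E s t < e/2"
    using order_tendstoD(2)[OF E_tendsto[OF s], of "e/2"] e(1) by simp
  have "\<forall>\<^sub>F t in at s within {0..T}. \<forall>x\<in>A. \<forall>b\<in>B. norm x + norm b \<le> (2/e) * norm (\<psi> t x + b)"
    using ev ev_in
  proof eventually_elim
    case (elim t)
    show ?case
    proof (intro ballI)
      fix x b assume x: "x \<in> A" and b: "b \<in> B"
      have "norm (\<psi> s x + b) \<le> norm (\<psi> t x + b) + norm (\<psi> t x - \<psi> s x)"
        using norm_triangle_ineq4[of "\<psi> t x + b" "\<psi> t x - \<psi> s x"] by (simp add: add.commute)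
      moreover have "norm (\<psi> t x - \<psi> s x) \<le> (e/2) * norm x"
        using E_bound[OF s elim(2), of x] mult_right_mono[OF less_imp_le[OF elim(1)] norm_ge_zero[of x]]
        by linarith
      ultimately show "norm x + norm b \<le> (2/e) * norm (\<psi> t x + b)"
        using e(2)[OF x b] by (intro key) linarith
    qed
  qed
  moreover have "\<forall>x\<in>A. \<forall>b\<in>B. norm x + norm b \<le> (2/e) * norm (\<psi> s x + b)"
  proof (intro ballI key)
    fix x b assume "x \<in> A" "b \<in> B"
    moreover have "0 \<le> (e/2) * norm x" using e(1) by simp
    ultimately show "e * (norm x + norm b) \<le> norm (\<psi> s x + b) + (e/2) * norm x"
      using e(2) by force
  qed
  ultimately show ?thesis using e(1) by (intro exI[of _ "2/e"]) auto
qed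

lemma E_comp:
  assumes s: "s \<in> {0..T}" and ev: "\<forall>\<^sub>F z in F. \<tau> z \<in> {0..T}" and lim: "(\<tau> \<longlongrightarrow> s) F"
  shows "((\<lambda>z. E s (\<tau> z)) \<longlongrightarrow> 0) F"
proof -
  obtain A' where der: "\<forall>t\<in>{0..T}. \<forall>v. ((\<lambda>s. \<psi> s v) has_vector_derivative A' t v) (at t within {0..T})"
    using psi_der by blast
  have "((\<lambda>z. \<psi> (\<tau> z) i) \<longlongrightarrow> \<psi> s i) F" for i
    by (rule continuous_within_tendsto_compose[OF has_vector_derivative_continuous[OF der[rule_format, OF s]] ev lim])
  then have "((\<lambda>z. norm (\<psi> (\<tau> z) i - \<psi> s i)) \<longlongrightarrow> 0) F" for i
    by (intro tendsto_norm_zero LIM_zero)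
  then show ?thesis unfolding E_def by (intro tendsto_null_sum)
qed

lemma psi_tend:
  assumes s: "s \<in> {0..T}" and ev: "\<forall>\<^sub>F z in F. \<tau> z \<in> {0..T}" and lim: "(\<tau> \<longlongrightarrow> s) F"
    and v: "(v \<longlongrightarrow> v0) F"
  shows "((\<lambda>z. \<psi> (\<tau> z) (v z)) \<longlongrightarrow> \<psi> s v0) F"
proof -
  have l1: "((\<lambda>z. E s (\<tau> z) * norm (v z)) \<longlongrightarrow> 0) F"
    using tendsto_mult[OF E_comp[OF s ev lim] tendsto_norm[OF v]] by simp
  have l2: "((\<lambda>z. \<psi> (\<tau> z) (v z) - \<psi> s (v z)) \<longlongrightarrow> 0) F"
    using ev by (intro Lim_null_comparison[OF _ l1]) (auto elim!: eventually_mono intro: E_bound[OF s])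
  have bl: "bounded_linear (\<psi> s)" using psi_lin[OF s] by (simp add: linear_conv_bounded_linear)
  have l3: "((\<lambda>z. \<psi> s (v z)) \<longlongrightarrow> \<psi> s v0) F"
    by (rule bounded_linear.tendsto[OF bl v])
  show ?thesis using tendsto_add[OF l2 l3] by simp
qed

definition P :: "real \<Rightarrow> bool" where
  "P t \<longleftrightarrow> (\<forall>x\<in>L1. \<forall>y\<in>L2. \<forall>m\<in>L3. \<psi> t y = \<psi> t x + m \<longrightarrow> \<omega> m (\<psi> t x) \<le> 0 \<longrightarrow> m = 0)"

lemma P_concl:
  assumes t: "t \<in> {0..T}" and P: "P t"
  shows "\<psi> t ` L2 \<inter> L3 = {0}"
proof
  show "\<psi> t ` L2 \<inter> L3 \<subseteq> {0}"
  proof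
    fix v assume v: "v \<in> \<psi> t ` L2 \<inter> L3"
    then obtain y where y: "y \<in> L2" "v = \<psi> t y" by blast
    have "\<psi> t y = \<psi> t 0 + v" using y linear_0[OF psi_lin[OF t]] by simp
    then have "v = 0" using P v y subspace_0[OF lag_sub[OF lag1]] linear_0[OF psi_lin[OF t]]
      unfolding P_def by (metis IntD2 bb.zero_right order_refl)
    then show "v \<in> {0}" by simp
  qed
next
  show "{0} \<subseteq> \<psi> t ` L2 \<inter> L3"
    using subspace_0[OF lag_sub[OF lag2]] subspace_0[OF lag_sub[OF lag3]] linear_0[OF psi_lin[OF t]]
    by (metis IntI empty_subsetI image_eqI insert_subset)
qed


lemma triple_normalize:
  assumes t: "t \<in> {0..T}" and x: "x \<in> L1" and y: "y \<in> L2" and m: "m \<in> L3"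
    and eq: "\<psi> t y = \<psi> t x + m" and val: "\<omega> m (\<psi> t x) \<le> 0" and m0: "m \<noteq> 0"
  shows "\<exists>x' y' m'. x' \<in> L1 \<and> y' \<in> L2 \<and> m' \<in> L3 \<and> \<psi> t y' = \<psi> t x' + m' \<and>
     \<omega> m' (\<psi> t x') \<le> 0 \<and> m' \<noteq> 0 \<and> (\<forall>k\<in>L1 \<inter> L2. k \<bullet> x' = 0) \<and> norm x' + norm y' + norm m' = 1"
proof -
  have lin: "linear (\<psi> t)" by (rule psi_lin[OF t])
  have sK: "subspace (L1 \<inter> L2)" using lag_sub[OF lag1] lag_sub[OF lag2] by (rule subspace_inter)
  then have spK: "span (L1 \<inter> L2) = L1 \<inter> L2" by (simp add: span_eq_iff)
  obtain k z where k: "k \<in> span (L1 \<inter> L2)" and z: "\<And>w. w \<in> span (L1 \<inter> L2) \<Longrightarrow> orthogonal z w"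
    and xkz: "x = k + z"
    using orthogonal_subspace_decomp_exists by blast
  have kK: "k \<in> L1" "k \<in> L2" using k spK by auto
  have x1: "z \<in> L1" using xkz x kK(1) lag_sub[OF lag1] by (metis add_diff_cancel_left' subspace_diff)
  have y1: "y - k \<in> L2" using y kK(2) lag_sub[OF lag2] by (simp add: subspace_diff)
  have d1: "\<psi> t (y - k) = \<psi> t y - \<psi> t k" by (rule linear_diff[OF lin])
  have d2: "\<psi> t x = \<psi> t k + \<psi> t z" using xkz linear_add[OF lin] by simp
  have eq1: "\<psi> t (y - k) = \<psi> t z + m"
    using eq d1 d2 by (simp add: algebra_simps)
  have "\<omega> m (\<psi> t k) = \<omega> (\<psi> t y) (\<psi> t k) - \<omega> (\<psi> t x) (\<psi> t k)"
    using eq by (simp add: bb.add_left)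
  also have "\<dots> = 0" using psi_om[OF t] lag_iso[OF lag2 y kK(2)] lag_iso[OF lag1 x kK(1)] by simp
  finally have mk: "\<omega> m (\<psi> t k) = 0" .
  have val1: "\<omega> m (\<psi> t z) \<le> 0"
    using val mk xkz linear_add[OF lin] by (simp add: bb.add_right)
  have orth1: "\<forall>k'\<in>L1 \<inter> L2. k' \<bullet> z = 0"
    using z spK unfolding orthogonal_def by (simp add: inner_commute)
  define c where "c = 1 / (norm z + norm (y - k) + norm m)"
  have pos: "norm z + norm (y - k) + norm m > 0" using m0
    by (metis add_nonneg_nonneg add_pos_nonneg norm_ge_zero zero_less_norm_iff add.commute)
  then have c: "c > 0" unfolding c_def by simp
  show ?thesis
  proof (intro exI conjI)
    show "c *\<^sub>R z \<in> L1" using x1 lag_sub[OF lag1] by (simp add: subspace_scale)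
    show "c *\<^sub>R (y - k) \<in> L2" using y1 lag_sub[OF lag2] by (simp add: subspace_scale)
    show "c *\<^sub>R m \<in> L3" using m lag_sub[OF lag3] by (simp add: subspace_scale)
    show "\<psi> t (c *\<^sub>R (y - k)) = \<psi> t (c *\<^sub>R z) + c *\<^sub>R m"
      using eq1 linear_scale[OF lin] by (simp add: scaleR_add_right[symmetric])
    have "\<omega> (c *\<^sub>R m) (\<psi> t (c *\<^sub>R z)) = c * (c * \<omega> m (\<psi> t z))"
      using linear_scale[OF lin] by (simp add: bb.scaleR_left bb.scaleR_right)
    also have "\<dots> \<le> 0" using c val1 by (simp add: mult_nonneg_nonpos)
    finally show "\<omega> (c *\<^sub>R m) (\<psi> t (c *\<^sub>R z)) \<le> 0" .
    show "c *\<^sub>R m \<noteq> 0" using c m0 by simp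
    show "\<forall>k\<in>L1 \<inter> L2. k \<bullet> c *\<^sub>R z = 0" using orth1 by simp
    have "norm (c *\<^sub>R z) + norm (c *\<^sub>R (y - k)) + norm (c *\<^sub>R m) = c * (norm z + norm (y - k) + norm m)"
      using c by (simp add: algebra_simps scaleR_diff_right[symmetric] del: scaleR_diff_right)
    also have "\<dots> = 1" using pos unfolding c_def by simp
    finally show "norm (c *\<^sub>R z) + norm (c *\<^sub>R (y - k)) + norm (c *\<^sub>R m) = 1" .
  qed
qed

lemma P_open:
  assumes s: "s \<in> {0..T}" and Ps: "P s"
  shows "\<forall>\<^sub>F t in at s within {0..T}. P t"
proof (rule sequentially_imp_eventually_within, intro allI impI)
  fix f assume f: "(\<forall>n. f n \<in> {0..T} \<and> f n \<noteq> s) \<and> f \<longlonglongrightarrow> s"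
  show "eventually (\<lambda>n. P (f n)) sequentially"
  proof (rule ccontr)
    assume "\<not> eventually (\<lambda>n. P (f n)) sequentially"
    then obtain r :: "nat \<Rightarrow> nat" where r: "strict_mono r" "\<And>n. \<not> P (f (r n))"
      using not_eventually_sequentiallyD by blast
    define g where "g = f \<circ> r"
    have gI: "g n \<in> {0..T}" for n using f unfolding g_def by simp
    have glim: "g \<longlonglongrightarrow> s" unfolding g_def using f r(1) by (simp add: LIMSEQ_subseq_LIMSEQ)
    have "\<forall>n. \<exists>p. fst p \<in> L1 \<and> fst (snd p) \<in> L2 \<and> snd (snd p) \<in> L3 \<and>
       \<psi> (g n) (fst (snd p)) = \<psi> (g n) (fst p) + snd (snd p) \<and>
       \<omega> (snd (snd p)) (\<psi> (g n) (fst p)) \<le> 0 \<and> snd (snd p) \<noteq> 0 \<and>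
       (\<forall>k\<in>L1 \<inter> L2. k \<bullet> fst p = 0) \<and> norm (fst p) + norm (fst (snd p)) + norm (snd (snd p)) = 1"
    proof
      fix n
      have "\<not> P (g n)" using r(2) unfolding g_def by simp
      then obtain x y m where "x \<in> L1" "y \<in> L2" "m \<in> L3" "\<psi> (g n) y = \<psi> (g n) x + m"
        "\<omega> m (\<psi> (g n) x) \<le> 0" "m \<noteq> 0" unfolding P_def by blast
      from triple_normalize[OF gI this] obtain x' y' m' where
        "x' \<in> L1 \<and> y' \<in> L2 \<and> m' \<in> L3 \<and> \<psi> (g n) y' = \<psi> (g n) x' + m' \<and>
         \<omega> m' (\<psi> (g n) x') \<le> 0 \<and> m' \<noteq> 0 \<and> (\<forall>k\<in>L1 \<inter> L2. k \<bullet> x' = 0) \<and> norm x' + norm y' + norm m' = 1"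
        by blast
      then show "\<exists>p. fst p \<in> L1 \<and> fst (snd p) \<in> L2 \<and> snd (snd p) \<in> L3 \<and>
       \<psi> (g n) (fst (snd p)) = \<psi> (g n) (fst p) + snd (snd p) \<and>
       \<omega> (snd (snd p)) (\<psi> (g n) (fst p)) \<le> 0 \<and> snd (snd p) \<noteq> 0 \<and>
       (\<forall>k\<in>L1 \<inter> L2. k \<bullet> fst p = 0) \<and> norm (fst p) + norm (fst (snd p)) + norm (snd (snd p)) = 1"
        by (intro exI[of _ "(x', y', m')"]) simp
    qed
    then obtain p where p: "\<And>n. fst (p n) \<in> L1 \<and> fst (snd (p n)) \<in> L2 \<and> snd (snd (p n)) \<in> L3 \<and>
       \<psi> (g n) (fst (snd (p n))) = \<psi> (g n) (fst (p n)) + snd (snd (p n)) \<and>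
       \<omega> (snd (snd (p n))) (\<psi> (g n) (fst (p n))) \<le> 0 \<and> snd (snd (p n)) \<noteq> 0 \<and>
       (\<forall>k\<in>L1 \<inter> L2. k \<bullet> fst (p n) = 0) \<and> norm (fst (p n)) + norm (fst (snd (p n))) + norm (snd (snd (p n))) = 1"
      by metis
    have "norm (p n) \<le> 1" for n
    proof -
      have "norm (p n) \<le> norm (fst (p n)) + norm (snd (p n))"
        using norm_Pair_le[of "fst (p n)" "snd (p n)"] by simp
      also have "\<dots> \<le> norm (fst (p n)) + (norm (fst (snd (p n))) + norm (snd (snd (p n))))"
        using norm_Pair_le[of "fst (snd (p n))" "snd (snd (p n))"] by simp
      also have "\<dots> = 1" using p[of n] by simp
      finally show ?thesis .
    qed
    then have "bounded (range p)" unfolding bounded_iff by blast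
    then obtain l r2 where r2: "strict_mono (r2 :: nat \<Rightarrow> nat)" and pl: "(p \<circ> r2) \<longlonglongrightarrow> l"
      using bounded_imp_convergent_subsequence by blast
    define X where "X n = fst (p (r2 n))" for n
    define Y where "Y n = fst (snd (p (r2 n)))" for n
    define M where "M n = snd (snd (p (r2 n)))" for n
    define h where "h = g \<circ> r2"
    have Xl: "X \<longlonglongrightarrow> fst l" using tendsto_fst[OF pl] unfolding X_def by (simp add: o_def)
    have Yl: "Y \<longlonglongrightarrow> fst (snd l)" using tendsto_fst[OF tendsto_snd[OF pl]] unfolding Y_def by (simp add: o_def)
    have Ml: "M \<longlonglongrightarrow> snd (snd l)" using tendsto_snd[OF tendsto_snd[OF pl]] unfolding M_def by (simp add: o_def)
    have hl: "h \<longlonglongrightarrow> s" unfolding h_def using glim r2 by (simp add: LIMSEQ_subseq_LIMSEQ)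
    have hI: "\<forall>\<^sub>F n in sequentially. h n \<in> {0..T}" using gI unfolding h_def by simp
    define x0 where "x0 = fst l"
    define y0 where "y0 = fst (snd l)"
    define m0 where "m0 = snd (snd l)"
    have pn: "X n \<in> L1" "Y n \<in> L2" "M n \<in> L3" "\<psi> (h n) (Y n) = \<psi> (h n) (X n) + M n"
      "\<omega> (M n) (\<psi> (h n) (X n)) \<le> 0" "\<forall>k\<in>L1 \<inter> L2. k \<bullet> X n = 0" "norm (X n) + norm (Y n) + norm (M n) = 1" for n
      using p[of "r2 n"] unfolding X_def Y_def M_def h_def by auto
    have x0: "x0 \<in> L1" unfolding x0_def
      by (rule closed_sequentially[OF closed_subspace[OF lag_sub[OF lag1]] _ Xl]) (use pn in auto)
    have y0: "y0 \<in> L2" unfolding y0_def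
      by (rule closed_sequentially[OF closed_subspace[OF lag_sub[OF lag2]] _ Yl]) (use pn in auto)
    have PX: "(\<lambda>n. \<psi> (h n) (X n)) \<longlonglongrightarrow> \<psi> s x0" unfolding x0_def by (rule psi_tend[OF s hI hl Xl])
    have PY: "(\<lambda>n. \<psi> (h n) (Y n)) \<longlonglongrightarrow> \<psi> s y0" unfolding y0_def by (rule psi_tend[OF s hI hl Yl])
    have "(\<lambda>n. \<psi> (h n) (X n) + M n) \<longlonglongrightarrow> \<psi> s x0 + m0" unfolding m0_def by (rule tendsto_add[OF PX Ml])
    then have "(\<lambda>n. \<psi> (h n) (Y n)) \<longlonglongrightarrow> \<psi> s x0 + m0" using pn(4) by simp
    then have eq0: "\<psi> s y0 = \<psi> s x0 + m0" using PY LIMSEQ_unique by blast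
    have "(\<lambda>n. \<omega> (M n) (\<psi> (h n) (X n))) \<longlonglongrightarrow> \<omega> m0 (\<psi> s x0)"
      unfolding m0_def by (rule bb.tendsto[OF Ml PX])
    then have val0: "\<omega> m0 (\<psi> s x0) \<le> 0" using pn(5) by (intro LIMSEQ_le_const2) auto
    have m0in: "m0 \<in> L3" unfolding m0_def
      by (rule closed_sequentially[OF closed_subspace[OF lag_sub[OF lag3]] _ Ml]) (use pn in auto)
    have "m0 = 0" using Ps x0 y0 m0in eq0 val0 unfolding P_def by blast
    then have "\<psi> s y0 = \<psi> s x0" using eq0 by simp
    then have yx: "y0 = x0" using psi_inj[OF s] by (simp add: inj_eq)
    have "(\<lambda>n. x0 \<bullet> X n) \<longlonglongrightarrow> x0 \<bullet> x0" unfolding x0_def by (intro tendsto_intros Xl)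
    moreover have "x0 \<bullet> X n = 0" for n using pn(6) x0 y0 yx by auto
    ultimately have "x0 \<bullet> x0 = 0" using LIMSEQ_unique tendsto_const by fastforce
    then have "x0 = 0" by simp
    have "(\<lambda>n. norm (X n) + norm (Y n) + norm (M n)) \<longlonglongrightarrow> norm x0 + norm y0 + norm m0"
      unfolding x0_def y0_def m0_def by (intro tendsto_intros Xl Yl Ml)
    moreover have "norm x0 + norm y0 + norm m0 = 0" using \<open>x0 = 0\<close> yx \<open>m0 = 0\<close> by simp
    ultimately have "(\<lambda>n. norm (X n) + norm (Y n) + norm (M n)) \<longlonglongrightarrow> 0" by simp
    moreover have "(\<lambda>n. norm (X n) + norm (Y n) + norm (M n)) = (\<lambda>n. 1)" using pn(7) by auto
    ultimately show False using LIMSEQ_unique tendsto_const by fastforce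
  qed
qed

end

lemma quad0:
  fixes L Q :: real
  assumes h: "\<And>c. 0 \<le> c * L + c * c * Q"
  shows "L = 0"
proof (rule ccontr)
  assume L: "L \<noteq> 0"
  define a where "a = \<bar>Q\<bar> + 1"
  have a: "a > 0" "Q \<le> a" unfolding a_def by auto
  define c where "c = - L / (2 * a)"
  have "c * c * Q \<le> c * c * a" using a(2) by (intro mult_left_mono) auto
  moreover have "c * L + c * c * a = - (L * L) / (4 * a)"
    unfolding c_def using a(1) by (simp add: field_simps)
  moreover have "L * L > 0" using L by (cases "L > 0") (auto simp: mult_neg_neg)
  then have "- (L * L) / (4 * a) < 0" using a(1) by (simp add: divide_pos_pos)
  ultimately have "c * L + c * c * Q < 0" by linarith
  with h[of c] show False by linarith
qed

context csetup
begin

lemma G_facts: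
  assumes s: "s \<in> {0..T}" "0 < s"
  shows "at s within {0<..<s} \<noteq> bot"
    and "at s within {0<..<s} \<le> at s within {0..T}"
    and "\<forall>\<^sub>F t in at s within {0<..<s}. t \<in> {0<..<s}"
proof -
  show "at s within {0<..<s} \<noteq> bot"
    using trivial_limit_within islimpt_greaterThanLessThan2[OF s(2)] by blast
  show "at s within {0<..<s} \<le> at s within {0..T}"
    using s by (intro at_le) auto
  show "\<forall>\<^sub>F t in at s within {0<..<s}. t \<in> {0<..<s}" by (rule ev_in)
qed

lemma tr13:
  assumes s: "s \<in> {0..T}" and a: "a \<in> L1" and b: "b \<in> L3" and eq: "\<psi> s a + b = 0"
  shows "a = 0 \<and> b = 0"
proof -
  have "\<psi> s a = - b" using eq by (simp add: eq_neg_iff_add_eq_0)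
  moreover have "- b \<in> L3" using b lag_sub[OF lag3] by (simp add: subspace_neg)
  moreover have "\<psi> s a \<in> \<psi> s ` L1" using a by blast
  ultimately have "\<psi> s a \<in> \<psi> s ` L1 \<inter> L3" by simp
  moreover have "\<psi> s ` L1 \<inter> L3 = {0}" using transv s by blast
  ultimately have "\<psi> s a = 0" by blast
  then have "a = 0" using psi_inj[OF s] linear_0[OF psi_lin[OF s]] by (metis injD)
  then show ?thesis using eq linear_0[OF psi_lin[OF s]] by simp
qed

lemma PSD_left:
  assumes s: "s \<in> {0..T}" "0 < s" and left: "\<And>t. t \<in> {0..<s} \<Longrightarrow> P t"
    and x: "x \<in> L1" and y: "y \<in> L2" and m: "m \<in> L3" and eq: "\<psi> s y = \<psi> s x + m"
  shows "0 \<le> \<omega> m (\<psi> s x)"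
proof (rule ccontr)
  assume neg: "\<not> 0 \<le> \<omega> m (\<psi> s x)"
  define G where "G = at s within {0<..<s}"
  have Gnb: "G \<noteq> bot" and Gle: "G \<le> at s within {0..T}" and GI: "\<forall>\<^sub>F t in G. t \<in> {0<..<s}"
    using G_facts[OF s] unfolding G_def by auto
  have GI': "\<forall>\<^sub>F t in G. t \<in> {0..T}" using GI s(1) by (auto elim!: eventually_mono)
  have Gid: "((\<lambda>t. t) \<longlongrightarrow> s) G" unfolding G_def by (rule tendsto_ident_at)
  obtain C where C: "C > 0" "\<forall>\<^sub>F t in at s within {0..T}. \<forall>a\<in>L1. \<forall>b\<in>L3. norm a + norm b \<le> C * norm (\<psi> t a + b)"
    using unif[OF s(1) lag_sub[OF lag1] lag_sub[OF lag3] tr13[OF s(1)]] by blast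
  have CG: "\<forall>\<^sub>F t in G. \<forall>a\<in>L1. \<forall>b\<in>L3. norm a + norm b \<le> C * norm (\<psi> t a + b)"
    by (rule filter_leD[OF Gle C(2)])
  define d where "d t = \<psi> t (y - x) - m" for t
  have ex: "\<exists>a. a \<in> L1 \<and> (\<exists>b\<in>L3. d t = \<psi> t a + b)" if t: "t \<in> {0..T}" for t
  proof -
    obtain a' b where "a' \<in> \<psi> t ` L1" "b \<in> L3" "d t = a' + b"
      using decomp[OF psi_lag[OF t lag1] lag3] transv t by blast
    then show ?thesis by blast
  qed
  define a where "a t = (SOME a. a \<in> L1 \<and> (\<exists>b\<in>L3. d t = \<psi> t a + b))" for t
  define b where "b t = d t - \<psi> t (a t)" for t
  have ab: "a t \<in> L1" "b t \<in> L3" "d t = \<psi> t (a t) + b t" if "t \<in> {0..T}" for t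
  proof -
    have "a t \<in> L1 \<and> (\<exists>b\<in>L3. d t = \<psi> t (a t) + b)"
      unfolding a_def by (rule someI_ex[OF ex[OF that]])
    then show "a t \<in> L1" "b t \<in> L3" "d t = \<psi> t (a t) + b t" unfolding b_def by auto
  qed
  have dlim: "(d \<longlongrightarrow> 0) G"
  proof -
    have "((\<lambda>t. \<psi> t (y - x)) \<longlongrightarrow> \<psi> s (y - x)) G"
      by (rule psi_tend[OF s(1) GI' Gid tendsto_const])
    moreover have "\<psi> s (y - x) = m" using eq linear_diff[OF psi_lin[OF s(1)]] by simp
    ultimately show ?thesis unfolding d_def using LIM_zero by fastforce
  qed
  have bnd: "\<forall>\<^sub>F t in G. norm (a t) + norm (b t) \<le> C * norm (d t)"
    using CG GI' by eventually_elim (use ab in auto)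
  have abl: "((\<lambda>t. norm (a t) + norm (b t)) \<longlongrightarrow> 0) G"
  proof (rule Lim_null_comparison)
    show "\<forall>\<^sub>F t in G. norm (norm (a t) + norm (b t)) \<le> C * norm (d t)"
      using bnd by eventually_elim simp
    show "((\<lambda>t. C * norm (d t)) \<longlongrightarrow> 0) G"
      using tendsto_mult[OF tendsto_const tendsto_norm[OF dlim], of C] by simp
  qed
  have al: "(a \<longlongrightarrow> 0) G"
    by (rule Lim_null_comparison[OF _ abl]) (auto intro: always_eventually)
  have bl: "(b \<longlongrightarrow> 0) G"
    by (rule Lim_null_comparison[OF _ abl]) (auto intro: always_eventually)
  have xa: "((\<lambda>t. x + a t) \<longlongrightarrow> x) G" using tendsto_add[OF tendsto_const al] by simp
  have mb: "((\<lambda>t. m + b t) \<longlongrightarrow> m) G" using tendsto_add[OF tendsto_const bl] by simp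
  have vl: "((\<lambda>t. \<omega> (m + b t) (\<psi> t (x + a t))) \<longlongrightarrow> \<omega> m (\<psi> s x)) G"
    by (rule bb.tendsto[OF mb psi_tend[OF s(1) GI' Gid xa]])
  have evneg: "\<forall>\<^sub>F t in G. \<omega> (m + b t) (\<psi> t (x + a t)) < 0"
    using order_tendstoD(2)[OF vl] neg by simp
  have "\<forall>\<^sub>F t in G. b t = - m"
    using evneg GI
  proof eventually_elim
    case (elim t)
    then have t: "t \<in> {0..T}" "t \<in> {0..<s}" using s by auto
    have lin: "linear (\<psi> t)" by (rule psi_lin[OF t(1)])
    have "\<psi> t y = \<psi> t x + \<psi> t (y - x)" using linear_diff[OF lin] by simp
    also have "\<dots> = \<psi> t (x + a t) + (m + b t)"
      using ab(3)[OF t(1)] linear_add[OF lin] unfolding d_def by (simp add: algebra_simps)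
    finally have eqt: "\<psi> t y = \<psi> t (x + a t) + (m + b t)" .
    have "x + a t \<in> L1" using x ab(1)[OF t(1)] lag_sub[OF lag1] by (simp add: subspace_add)
    moreover have "m + b t \<in> L3" using m ab(2)[OF t(1)] lag_sub[OF lag3] by (simp add: subspace_add)
    ultimately have "m + b t = 0"
      using left[OF t(2)] y eqt elim(1) unfolding P_def by (meson less_imp_le)
    then show ?case by (simp add: eq_neg_iff_add_eq_0 add.commute)
  qed
  then have "((\<lambda>t. b t) \<longlongrightarrow> - m) G" by (rule tendsto_eventually)
  then have "- m = 0" using tendsto_unique[OF Gnb _ bl] by blast
  then have "m = 0" by simp
  then show False using neg by (simp add: bb.zero_left)
qed

lemma psd_zero_crossing:
  assumes s: "s \<in> {0..T}"
    and psd: "\<And>x y m. x \<in> L1 \<Longrightarrow> y \<in> L2 \<Longrightarrow> m \<in> L3 \<Longrightarrow> \<psi> s y = \<psi> s x + m \<Longrightarrow> 0 \<le> \<omega> m (\<psi> s x)"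
    and x0: "x0 \<in> L1" and y0: "y0 \<in> L2" and m0: "m0 \<in> L3" and eq0: "\<psi> s y0 = \<psi> s x0 + m0"
    and val0: "\<omega> m0 (\<psi> s x0) = 0"
  shows "m0 \<in> \<psi> s ` L2"
proof (rule lag_max[OF psi_lag[OF s lag2]])
  fix u assume "u \<in> \<psi> s ` L2"
  then obtain y' where y': "y' \<in> L2" "u = \<psi> s y'" by blast
  obtain a' m' where a': "a' \<in> \<psi> s ` L1" and m': "m' \<in> L3" and ua: "u = a' + m'"
    using decomp[OF psi_lag[OF s lag1] lag3] transv s by blast
  obtain x' where x': "x' \<in> L1" "a' = \<psi> s x'" using a' by blast
  have lin: "linear (\<psi> s)" by (rule psi_lin[OF s])
  have uy: "\<psi> s y' = \<psi> s x' + m'" using ua y'(2) x'(2) by simp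
  have "0 \<le> c * (\<omega> m0 (\<psi> s x') + \<omega> m' (\<psi> s x0)) + c * c * \<omega> m' (\<psi> s x')" for c
  proof -
    have "x0 + c *\<^sub>R x' \<in> L1" using x0 x'(1) lag_sub[OF lag1] by (simp add: subspace_add subspace_scale)
    moreover have "y0 + c *\<^sub>R y' \<in> L2" using y0 y'(1) lag_sub[OF lag2] by (simp add: subspace_add subspace_scale)
    moreover have "m0 + c *\<^sub>R m' \<in> L3" using m0 m' lag_sub[OF lag3] by (simp add: subspace_add subspace_scale)
    moreover have "\<psi> s (y0 + c *\<^sub>R y') = \<psi> s (x0 + c *\<^sub>R x') + (m0 + c *\<^sub>R m')"
      using eq0 uy linear_add[OF lin] linear_scale[OF lin] by (simp add: algebra_simps)
    ultimately have "0 \<le> \<omega> (m0 + c *\<^sub>R m') (\<psi> s (x0 + c *\<^sub>R x'))" by (rule psd)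
    also have "\<omega> (m0 + c *\<^sub>R m') (\<psi> s (x0 + c *\<^sub>R x')) =
        \<omega> m0 (\<psi> s x0) + c * (\<omega> m0 (\<psi> s x') + \<omega> m' (\<psi> s x0)) + c * c * \<omega> m' (\<psi> s x')"
      using linear_add[OF lin] linear_scale[OF lin]
      by (simp add: bb.add_left bb.add_right bb.scaleR_left bb.scaleR_right algebra_simps)
    finally show ?thesis using val0 by simp
  qed
  then have L0: "\<omega> m0 (\<psi> s x') + \<omega> m' (\<psi> s x0) = 0" by (rule quad0)
  have "0 = \<omega> (\<psi> s y0) u" using y'(2) psi_om[OF s] lag_iso[OF lag2 y0 y'(1)] by simp
  also have "\<dots> = \<omega> (\<psi> s x0) (\<psi> s x') + \<omega> (\<psi> s x0) m' + \<omega> m0 (\<psi> s x') + \<omega> m0 m'"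
    using eq0 ua x'(2) by (simp add: bb.add_left bb.add_right)
  also have "\<omega> (\<psi> s x0) (\<psi> s x') = 0" using psi_om[OF s] lag_iso[OF lag1 x0 x'(1)] by simp
  also have "\<omega> m0 m' = 0" using lag_iso[OF lag3 m0 m'] .
  finally have "\<omega> (\<psi> s x0) m' + \<omega> m0 (\<psi> s x') = 0" by simp
  moreover have "\<omega> (\<psi> s x0) m' = - \<omega> m' (\<psi> s x0)" by (rule skew)
  ultimately have "\<omega> m0 (\<psi> s x') = 0" using L0 by linarith
  then show "\<omega> m0 u = 0" using ua x'(2) lag_iso[OF lag3 m0 m'] by (simp add: bb.add_right)
qed

end

context csetup
begin

lemma cross_contra:
  assumes s: "s \<in> {0..T}" "0 < s" and left: "\<And>t. t \<in> {0..<s} \<Longrightarrow> P t"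
    and v2: "v \<in> \<psi> s ` L2" and v3: "v \<in> L3" and v0: "v \<noteq> 0"
    and W: "lagrangian \<omega> W" and WL: "W \<inter> \<psi> s ` L2 = {0}"
    and D: "D > 0"
    and der: "((\<lambda>t. \<omega> v (crossing_vec W (\<lambda>t. \<psi> t ` L2) v t)) has_real_derivative D) (at s within {0..T})"
  shows False
proof -
  define G where "G = at s within {0<..<s}"
  have Gnb: "G \<noteq> bot" and Gle: "G \<le> at s within {0..T}" and GI: "\<forall>\<^sub>F t in G. t \<in> {0<..<s}"
    using G_facts[OF s] unfolding G_def by auto
  have sW: "subspace W" using W by (rule lag_sub)
  obtain y0 where y0: "y0 \<in> L2" "\<psi> s y0 = v" using v2 by auto
  have tr2: "y = 0 \<and> w = 0" if y: "y \<in> L2" and w: "w \<in> W" and e: "\<psi> s y + w = 0" for y w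
  proof -
    have "\<psi> s y = - w" using e by (simp add: eq_neg_iff_add_eq_0)
    moreover have "- w \<in> W" using w sW by (simp add: subspace_neg)
    moreover have "\<psi> s y \<in> \<psi> s ` L2" using y by blast
    ultimately have "\<psi> s y \<in> W \<inter> \<psi> s ` L2" by simp
    then have "\<psi> s y = 0" using WL by blast
    then have "y = 0" using psi_inj[OF s(1)] linear_0[OF psi_lin[OF s(1)]] by (metis injD)
    then show ?thesis using e linear_0[OF psi_lin[OF s(1)]] by simp
  qed
  obtain C1 where C1: "C1 > 0" "\<forall>y\<in>L2. \<forall>w\<in>W. norm y + norm w \<le> C1 * norm (\<psi> s y + w)"
    "\<forall>\<^sub>F t in at s within {0..T}. \<forall>y\<in>L2. \<forall>w\<in>W. norm y + norm w \<le> C1 * norm (\<psi> t y + w)"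
    using unif[OF s(1) lag_sub[OF lag2] sW tr2] by blast
  obtain C2 where C2: "C2 > 0"
    "\<forall>\<^sub>F t in at s within {0..T}. \<forall>a\<in>L1. \<forall>b\<in>L3. norm a + norm b \<le> C2 * norm (\<psi> t a + b)"
    using unif[OF s(1) lag_sub[OF lag1] lag_sub[OF lag3] tr13[OF s(1)]] by blast
  obtain \<kappa> where \<kappa>: "\<forall>\<^sub>F t in at s within {0..T}. E s t \<le> \<kappa> * \<bar>t - s\<bar>"
    using E_lip[OF s(1)] by blast
  obtain M where M: "M > 0" "\<forall>t\<in>{0..T}. E s t \<le> 1 \<longrightarrow> (\<forall>z. norm (\<psi> t z) \<le> M * norm z)"
    using psi_bound[OF s(1)] by blast
  obtain K where K: "K > 0" "\<forall>x y. \<bar>\<omega> x y\<bar> \<le> K * norm x * norm y"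
    using omega_bound by blast
  define cv where "cv t = crossing_vec W (\<lambda>t. \<psi> t ` L2) v t" for t
  define f where "f t = \<omega> v (cv t)" for t
  have sL2: "subspace (\<psi> t ` L2)" if "t \<in> {0..T}" for t
    using psi_lag[OF that lag2] by (rule lag_sub)
  have cvs: "cv s = 0"
    unfolding cv_def crossing_vec_def
  proof (rule the_equality)
    show "0 \<in> W \<and> v + 0 \<in> \<psi> s ` L2" using v2 sW by (simp add: subspace_0)
  next
    fix w assume w: "w \<in> W \<and> v + w \<in> \<psi> s ` L2"
    then have "(v + w) - v \<in> \<psi> s ` L2" using v2 sL2[OF s(1)] by (blast intro: subspace_diff)
    then have "w \<in> W \<inter> \<psi> s ` L2" using w by simp
    then show "w = 0" using WL by blast
  qed
  have fs: "f s = 0" unfolding f_def cvs by (simp add: bb.zero_right)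
  have "((\<lambda>t. (f t - f s) / (t - s)) \<longlongrightarrow> D) (at s within {0..T})"
    using der unfolding has_field_derivative_iff f_def cv_def .
  then have limq: "((\<lambda>t. (f t - f s) / (t - s)) \<longlongrightarrow> D) G" by (rule tendsto_mono[OF Gle])
  have evq: "\<forall>\<^sub>F t in G. (f t - f s) / (t - s) > D / 2"
    by (rule order_tendstoD(1)[OF limq]) (use D in simp)
  define lam where "lam = C1 * \<bar>\<kappa>\<bar> * norm y0"
  define Q where "Q = K * M * C2 * C2 * lam * lam"
  define \<delta> where "\<delta> = min (D / (2 * (Q + 1))) (norm v / (C2 * lam + 1))"
  have lam0: "lam \<ge> 0" unfolding lam_def using C1 by simp
  have Q0: "Q \<ge> 0" unfolding Q_def using K M C2 lam0 by simp
  have \<delta>0: "\<delta> > 0" unfolding \<delta>_def using D Q0 v0 C2 lam0 by (simp add: add_nonneg_pos)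
  have evd: "\<forall>\<^sub>F t in G. dist t s < \<delta>"
    unfolding G_def eventually_at using \<delta>0 by blast
  have Esm: "\<forall>\<^sub>F t in G. E s t < min 1 (1 / (2 * C1))"
    using order_tendstoD(2)[OF tendsto_mono[OF Gle E_tendsto[OF s(1)]], of "min 1 (1 / (2 * C1))"] C1(1) by simp
  have "\<forall>\<^sub>F t in G. t \<in> {0<..<s} \<and>
      (\<forall>y\<in>L2. \<forall>w\<in>W. norm y + norm w \<le> C1 * norm (\<psi> t y + w)) \<and>
      (\<forall>a\<in>L1. \<forall>b\<in>L3. norm a + norm b \<le> C2 * norm (\<psi> t a + b)) \<and>
      E s t \<le> \<kappa> * \<bar>t - s\<bar> \<and> E s t < min 1 (1 / (2 * C1)) \<and>
      (f t - f s) / (t - s) > D / 2 \<and> dist t s < \<delta>"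
    using GI filter_leD[OF Gle C1(3)] filter_leD[OF Gle C2(2)] filter_leD[OF Gle \<kappa>] Esm evq evd
    by eventually_elim blast
  then obtain t where t0: "t \<in> {0<..<s}"
    and h1: "\<forall>y\<in>L2. \<forall>w\<in>W. norm y + norm w \<le> C1 * norm (\<psi> t y + w)"
    and h2: "\<forall>a\<in>L1. \<forall>b\<in>L3. norm a + norm b \<le> C2 * norm (\<psi> t a + b)"
    and h3: "E s t \<le> \<kappa> * \<bar>t - s\<bar>" and h4: "E s t < min 1 (1 / (2 * C1))"
    and h5: "(f t - f s) / (t - s) > D / 2" and h6: "dist t s < \<delta>"
    using eventually_happens'[OF Gnb] by blast
  have tI: "t \<in> {0..T}" using t0 s by auto
  have tl: "t \<in> {0..<s}" using t0 by auto
  have lin: "linear (\<psi> t)" by (rule psi_lin[OF tI])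
  have WLt: "\<psi> t ` L2 \<inter> W = {0}"
  proof
    show "\<psi> t ` L2 \<inter> W \<subseteq> {0}"
    proof
      fix u assume u: "u \<in> \<psi> t ` L2 \<inter> W"
      then obtain y where y: "y \<in> L2" "u = \<psi> t y" by blast
      have "- u \<in> W" using u sW by (simp add: subspace_neg)
      then have "norm y + norm (- u) \<le> C1 * norm (\<psi> t y + - u)" using h1 y(1) by blast
      then have "norm y + norm u \<le> 0" using y(2) by simp
      then have "norm u = 0" using norm_ge_zero[of y] norm_ge_zero[of u] by linarith
      then show "u \<in> {0}" by simp
    qed
    show "{0} \<subseteq> \<psi> t ` L2 \<inter> W" using sL2[OF tI] sW by (simp add: subspace_0)
  qed
  have ex1: "\<exists>!w. w \<in> W \<and> v + w \<in> \<psi> t ` L2"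
  proof -
    obtain a w where a: "a \<in> \<psi> t ` L2" and w: "w \<in> W" and aw: "- v = a + w"
      using decomp[OF psi_lag[OF tI lag2] W WLt] by blast
    have vv: "v = - (a + w)" using aw by (metis minus_minus)
    have "v + w = - a" unfolding vv by simp
    then have "v + w \<in> \<psi> t ` L2" using a sL2[OF tI] by (simp add: subspace_neg)
    moreover have "w1 = w2" if "w1 \<in> W \<and> v + w1 \<in> \<psi> t ` L2" "w2 \<in> W \<and> v + w2 \<in> \<psi> t ` L2" for w1 w2
    proof -
      have "(v + w1) - (v + w2) \<in> \<psi> t ` L2" using that sL2[OF tI] by (blast intro: subspace_diff)
      moreover have "w1 - w2 \<in> W" using that sW by (blast intro: subspace_diff)
      ultimately have "w1 - w2 \<in> \<psi> t ` L2 \<inter> W" by simp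
      then show ?thesis using WLt by simp
    qed
    ultimately show ?thesis using w by blast
  qed
  have cvt: "cv t \<in> W \<and> v + cv t \<in> \<psi> t ` L2"
    unfolding cv_def crossing_vec_def by (rule theI'[OF ex1])
  have "v + cv t \<in> \<psi> t ` L2" using cvt by simp
  then obtain yt where yt0: "yt \<in> L2" "v + cv t = \<psi> t yt" by (rule imageE)
  then have yt: "yt \<in> L2" "\<psi> t yt = v + cv t" by auto
  define e where "e = E s t"
  define r where "r = norm (yt - y0)"
  define c where "c = norm (cv t)"
  have e0: "e \<ge> 0" unfolding e_def by (rule E_nonneg)
  have "yt - y0 \<in> L2" using yt(1) y0(1) lag_sub[OF lag2] by (simp add: subspace_diff)
  moreover have "- cv t \<in> W" using cvt sW by (simp add: subspace_neg)
  ultimately have "norm (yt - y0) + norm (- cv t) \<le> C1 * norm (\<psi> s (yt - y0) + - cv t)"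
    using C1(2) by blast
  moreover have "\<psi> s (yt - y0) + - cv t = \<psi> s yt - \<psi> t yt"
    using yt(2) y0(2) linear_diff[OF psi_lin[OF s(1)]] by simp
  moreover have "norm (\<psi> s yt - \<psi> t yt) \<le> e * norm yt"
    using E_bound[OF s(1) tI, of yt] unfolding e_def by (simp add: norm_minus_commute)
  moreover have "norm yt \<le> norm y0 + r" unfolding r_def using norm_triangle_sub[of yt y0]
    by (simp add: add.commute)
  ultimately have "r + c \<le> C1 * (e * (norm y0 + r))" unfolding r_def c_def
    using C1(1) e0 by (smt (z3) mult_left_mono mult_nonneg_nonneg norm_ge_zero norm_minus_cancel)
  then have rc: "r + c \<le> C1 * e * norm y0 + C1 * e * r" by (simp add: algebra_simps)
  have eC: "e < 1 / (2 * C1)" and e1: "e \<le> 1" using h4 unfolding e_def by auto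
  have "C1 * e < C1 * (1 / (2 * C1))" by (rule mult_strict_left_mono[OF eC C1(1)])
  then have C1e: "C1 * e < 1 / 2" using C1(1) by simp
  have "C1 * e * r \<le> 1 * r" using C1e unfolding r_def by (intro mult_right_mono) auto
  then have cb: "c \<le> C1 * e * norm y0" using rc unfolding r_def by simp
  have ts: "\<bar>t - s\<bar> = s - t" and ts0: "s - t > 0" using t0 by auto
  have "e \<le> \<bar>\<kappa>\<bar> * \<bar>t - s\<bar>" using h3 unfolding e_def
    by (meson abs_ge_self abs_ge_zero mult_right_mono order_trans)
  then have "C1 * e * norm y0 \<le> C1 * (\<bar>\<kappa>\<bar> * \<bar>t - s\<bar>) * norm y0"
    using C1(1) by (intro mult_right_mono mult_left_mono) auto
  then have clam: "c \<le> lam * (s - t)" using cb ts unfolding lam_def by (simp add: algebra_simps)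
  have c0: "c \<ge> 0" unfolding c_def by simp
  obtain a' b where a': "a' \<in> \<psi> t ` L1" and b: "b \<in> L3" and cab: "cv t = a' + b"
    using decomp[OF psi_lag[OF tI lag1] lag3] transv tI by blast
  obtain a where a: "a \<in> L1" "a' = \<psi> t a" using a' by blast
  have "norm a + norm b \<le> C2 * norm (\<psi> t a + b)" using h2 a(1) b by blast
  then have abC: "norm a + norm b \<le> C2 * c" using cab a(2) unfolding c_def by simp
  then have aC: "norm a \<le> C2 * c" and bC: "norm b \<le> C2 * c" using norm_ge_zero[of a] norm_ge_zero[of b] by linarith+
  have eqt: "\<psi> t yt = \<psi> t a + (v + b)" using yt(2) cab a(2) by (simp add: algebra_simps)
  have vb: "v + b \<in> L3" using v3 b lag_sub[OF lag3] by (simp add: subspace_add)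
  have Pimp: "\<omega> (v + b) (\<psi> t a) \<le> 0 \<longrightarrow> v + b = 0"
    using left[OF tl] a(1) yt(1) vb eqt unfolding P_def by blast
  have "\<omega> v (\<psi> t a) = \<omega> v (cv t - b)" using cab a(2) by simp
  also have "\<dots> = f t" using lag_iso[OF lag3 v3 b] unfolding f_def by (simp add: bb.diff_right)
  finally have vpa: "\<omega> v (\<psi> t a) = f t" .
  have val: "\<omega> (v + b) (\<psi> t a) = f t + \<omega> b (\<psi> t a)" using vpa by (simp add: bb.add_left)
  have psia: "norm (\<psi> t a) \<le> M * norm a" using M(2) tI e1 unfolding e_def by blast
  have "\<bar>\<omega> b (\<psi> t a)\<bar> \<le> K * norm b * norm (\<psi> t a)" using K(2) by blast
  also have "\<dots> = K * (norm b * norm (\<psi> t a))" by simp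
  also have "\<dots> \<le> K * ((C2 * c) * (M * (C2 * c)))"
  proof (intro mult_left_mono mult_mono)
    show "norm (\<psi> t a) \<le> M * (C2 * c)"
      using psia mult_left_mono[OF aC, of M] M(1) by linarith
  qed (use bC K M C2 c0 in auto)
  also have "\<dots> = K * M * C2 * C2 * (c * c)" by (simp add: algebra_simps)
  also have "\<dots> \<le> K * M * C2 * C2 * ((lam * (s - t)) * (lam * (s - t)))"
    using K M C2 c0 clam by (intro mult_left_mono mult_mono) auto
  also have "\<dots> = Q * (s - t) * (s - t)" unfolding Q_def by (simp add: algebra_simps)
  finally have wb: "\<bar>\<omega> b (\<psi> t a)\<bar> \<le> Q * (s - t) * (s - t)" .
  have "D / 2 < f t / (t - s)" using h5 fs by simp
  then have ft: "f t < D / 2 * (t - s)" using ts0 by (simp add: neg_less_divide_eq)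
  have std: "s - t < \<delta>" using h6 ts by (simp add: dist_real_def)
  have "Q * (s - t) \<le> Q * \<delta>" using Q0 std by (intro mult_left_mono) auto
  also have "\<dots> \<le> Q * (D / (2 * (Q + 1)))" using Q0 unfolding \<delta>_def by (intro mult_left_mono) auto
  also have "\<dots> < D / 2" using Q0 D by (simp add: field_simps)
  finally have "Q * (s - t) < D / 2" .
  then have "Q * (s - t) * (s - t) < D / 2 * (s - t)" using ts0 by (rule mult_strict_right_mono)
  then have "\<omega> (v + b) (\<psi> t a) < 0" using val wb ft by (simp add: algebra_simps)
  then have "v + b = 0" using Pimp by simp
  then have "norm v = norm b" by (metis add.inverse_unique norm_minus_cancel)
  also have "\<dots> \<le> C2 * c" by (rule bC)
  also have "\<dots> \<le> C2 * (lam * (s - t))" using clam C2 by (intro mult_left_mono) auto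
  also have "\<dots> \<le> C2 * (lam * \<delta>)" using std C2 lam0 by (intro mult_left_mono) auto
  also have "\<dots> \<le> C2 * (lam * (norm v / (C2 * lam + 1)))"
    using C2 lam0 unfolding \<delta>_def by (intro mult_left_mono) auto
  also have "\<dots> = (C2 * lam) * norm v / (C2 * lam + 1)" by simp
  also have "\<dots> < norm v"
  proof -
    have X0: "C2 * lam \<ge> 0" using C2 lam0 by simp
    have nv: "norm v > 0" using v0 by simp
    have "(C2 * lam) * norm v < norm v * (C2 * lam + 1)" using nv by (simp add: algebra_simps)
    then show ?thesis using X0 by (simp add: divide_less_eq)
  qed
  finally show False by simp
qed

end

context csetup
begin

lemma P_left:
  assumes s: "s \<in> {0..T}" "0 < s" and left: "\<And>t. t \<in> {0..<s} \<Longrightarrow> P t"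
    and plus: "plus_curve \<omega> L3 {0..T} (\<lambda>t. \<psi> t ` L2)"
  shows "P s"
  unfolding P_def
proof (intro ballI impI)
  fix x y m assume x: "x \<in> L1" and y: "y \<in> L2" and m: "m \<in> L3"
    and eq: "\<psi> s y = \<psi> s x + m" and val: "\<omega> m (\<psi> s x) \<le> 0"
  have psd: "\<And>x y m. x \<in> L1 \<Longrightarrow> y \<in> L2 \<Longrightarrow> m \<in> L3 \<Longrightarrow> \<psi> s y = \<psi> s x + m \<Longrightarrow> 0 \<le> \<omega> m (\<psi> s x)"
    using PSD_left[OF s left] by blast
  have val0: "\<omega> m (\<psi> s x) = 0" using psd[OF x y m eq] val by simp
  show "m = 0"
  proof (rule ccontr)
    assume m0: "m \<noteq> 0"
    have m2: "m \<in> \<psi> s ` L2" by (rule psd_zero_crossing[OF s(1) psd x y m eq val0])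
    have mi: "m \<in> \<psi> s ` L2 \<inter> L3" using m2 m by simp
    have cross: "\<psi> s ` L2 \<inter> L3 \<noteq> {0}" using mi m0 by blast
    have pc: "\<forall>t0\<in>{0..T}. \<psi> t0 ` L2 \<inter> L3 \<noteq> {0} \<longrightarrow>
        (\<exists>W. lagrangian \<omega> W \<and> W \<inter> \<psi> t0 ` L2 = {0} \<and>
           (\<forall>v\<in>\<psi> t0 ` L2 \<inter> L3. v \<noteq> 0 \<longrightarrow>
              (\<exists>D>0. ((\<lambda>t. \<omega> v (crossing_vec W (\<lambda>t. \<psi> t ` L2) v t)) has_real_derivative D) (at t0 within {0..T}))))"
      using plus unfolding plus_curve_def .
    have "\<exists>W. lagrangian \<omega> W \<and> W \<inter> \<psi> s ` L2 = {0} \<and>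
           (\<forall>v\<in>\<psi> s ` L2 \<inter> L3. v \<noteq> 0 \<longrightarrow>
              (\<exists>D>0. ((\<lambda>t. \<omega> v (crossing_vec W (\<lambda>t. \<psi> t ` L2) v t)) has_real_derivative D) (at s within {0..T})))"
      by (rule mp[OF bspec[OF pc s(1)] cross])
    then obtain W where W: "lagrangian \<omega> W" "W \<inter> \<psi> s ` L2 = {0}"
      and Wd: "\<forall>v\<in>\<psi> s ` L2 \<inter> L3. v \<noteq> 0 \<longrightarrow>
              (\<exists>D>0. ((\<lambda>t. \<omega> v (crossing_vec W (\<lambda>t. \<psi> t ` L2) v t)) has_real_derivative D) (at s within {0..T}))"
      by (elim exE conjE)
    obtain D where Dp: "D > 0" and Dd: "((\<lambda>t. \<omega> m (crossing_vec W (\<lambda>t. \<psi> t ` L2) m t)) has_real_derivative D) (at s within {0..T})"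
      using Wd[rule_format, OF mi m0] by (elim exE conjE)
    show False by (rule cross_contra[OF s left m2 m m0 W(1) W(2) Dp Dd])
  qed
qed

lemma Qval:
  assumes y: "y \<in> L2" and z: "z \<in> L3" and xe: "x = y + z"
  shows "Qform \<omega> L2 L3 x = \<omega> y z"
proof -
  define p where "p = (SOME p. fst p \<in> L2 \<and> snd p \<in> L3 \<and> x = fst p + snd p)"
  have "fst p \<in> L2 \<and> snd p \<in> L3 \<and> x = fst p + snd p"
    unfolding p_def by (rule someI[of _ "(y, z)"]) (use y z xe in simp)
  then have p: "fst p \<in> L2" "snd p \<in> L3" "x = fst p + snd p" by auto
  define d where "d = fst p - y"
  have d2: "d \<in> L2" unfolding d_def using p(1) y lag_sub[OF lag2] by (simp add: subspace_diff)
  have "d = z - snd p" unfolding d_def using p(3) xe by (simp add: algebra_simps)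
  then have d3: "d \<in> L3" using p(2) z lag_sub[OF lag3] by (simp add: subspace_diff)
  have f: "fst p = y + d" unfolding d_def by simp
  have sn: "snd p = z - d" using \<open>d = z - snd p\<close> by simp
  have "\<omega> (fst p) (snd p) = \<omega> y z - \<omega> y d + \<omega> d z - \<omega> d d"
    unfolding f sn by (simp add: bb.add_left bb.diff_right)
  also have "\<dots> = \<omega> y z" using lag_iso[OF lag2 y d2] lag_iso[OF lag3 d3 z] by simp
  finally show ?thesis unfolding Qform_def p_def[symmetric] by (simp add: Let_def)
qed

lemma P0:
  assumes idx: "triple_index \<omega> L1 L2 L3 = n - dim (L1 \<inter> L2)"
  shows "P 0"
proof -
  have sub1: "subspace L1" and sub2: "subspace L2" and sub3: "subspace L3"
    using lag_sub lag1 lag2 lag3 by auto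
  have T0': "0 \<in> {0..T}" using T0 by simp
  have "\<psi> 0 ` L1 \<inter> L3 = {0}" using transv T0' by blast
  then have L13: "L1 \<inter> L3 = {0}" using psi0 by simp
  define K where "K = L1 \<inter> L2"
  define k where "k = dim K"
  have sK: "subspace K" unfolding K_def using sub1 sub2 by (rule subspace_inter)
  define S where "S = L1 \<inter> (L2 + L3)"
  define Q where "Q = Qform \<omega> L2 L3"
  have dL1: "dim L1 = n" by (rule dim_lag[OF lag1])
  have kn: "k \<le> n" unfolding k_def K_def using dim_subset[of "L1 \<inter> L2" L1] dL1 by auto
  have d123: "dim (L1 \<inter> L2 \<inter> L3) = 0" using L13 by auto
  have d13: "dim (L1 \<inter> L3) = 0" using L13 by simp
  have pin: "pos_inertia Q S = n - k"
    using idx d123 d13 unfolding triple_index_def Q_def S_def k_def K_def by simp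
  define Dset where "Dset = {dim U | U. subspace U \<and> U \<subseteq> S \<and> (\<forall>x\<in>U. x \<noteq> 0 \<longrightarrow> Q x > 0)}"
  have "finite Dset"
    by (rule finite_subset[of _ "{..DIM('v)}"]) (auto simp: Dset_def dim_subset_UNIV)
  moreover have "Dset \<noteq> {}"
  proof -
    have "0 \<in> S" unfolding S_def using sub1 sub2 sub3
      by (auto simp: subspace_0 set_plus_def intro!: bexI[of _ 0])
    then have "dim {0::'v} \<in> Dset" unfolding Dset_def
      by (intro CollectI exI[of _ "{0::'v}"]) simp
    then show ?thesis by blast
  qed
  ultimately have "Max Dset \<in> Dset" by (rule Max_in)
  then obtain U where U: "subspace U" "U \<subseteq> S" "\<And>x. x \<in> U \<Longrightarrow> x \<noteq> 0 \<Longrightarrow> Q x > 0" "dim U = n - k"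
    using pin unfolding pos_inertia_def Dset_def by auto
  have US1: "U \<subseteq> L1" using U(2) unfolding S_def by auto
  have spanK: "span K = K" using sK by (simp add: span_eq_iff)
  have claimA: "x \<in> K" if x: "x \<in> L1" and y: "y \<in> L2" and m: "m \<in> L3" and e: "y = x + m"
    and val: "\<omega> m x \<le> 0" for x y m
  proof (rule ccontr)
    assume xK: "x \<notin> K"
    define N where "N = span (insert x K)"
    have sN: "subspace N" unfolding N_def by simp
    have NL1: "N \<subseteq> L1" unfolding N_def using x sub1 by (intro span_minimal) (auto simp: K_def)
    have xs: "x \<notin> span K" using xK spanK by metis
    have dN: "dim N = k + 1" unfolding N_def k_def using xs by (simp add: dim_insert)
    have Qneg: "Q z \<le> 0" if z: "z \<in> N" for z
    proof -
      obtain c where "z - c *\<^sub>R x \<in> span K" using z unfolding N_def span_insert by auto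
      then have kz: "z - c *\<^sub>R x \<in> K" using spanK by simp
      define k' where "k' = z - c *\<^sub>R x"
      have k'K: "k' \<in> L1" "k' \<in> L2" using kz unfolding k'_def K_def by auto
      have "z = (k' + c *\<^sub>R y) + (- (c *\<^sub>R m))" unfolding k'_def e by (simp add: algebra_simps)
      moreover have "k' + c *\<^sub>R y \<in> L2" using k'K(2) y sub2 by (simp add: subspace_add subspace_scale)
      moreover have "- (c *\<^sub>R m) \<in> L3" using m sub3 by (simp add: subspace_neg subspace_scale)
      ultimately have "Q z = \<omega> (k' + c *\<^sub>R y) (- (c *\<^sub>R m))" unfolding Q_def by (rule Qval[rotated 2])
      also have "\<dots> = - c * \<omega> k' m - c * c * \<omega> y m"
        by (simp add: bb.add_left bb.minus_right bb.scaleR_left bb.scaleR_right algebra_simps)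
      also have "\<omega> k' m = 0"
      proof -
        have "\<omega> k' m = \<omega> k' y - \<omega> k' x" using e by (simp add: bb.add_right)
        then show ?thesis using lag_iso[OF lag2 k'K(2) y] lag_iso[OF lag1 k'K(1) x] by simp
      qed
      also have "\<omega> y m = - \<omega> m x" using e skew[of x m] by (simp add: bb.add_left)
      finally have "Q z = c * c * \<omega> m x" by simp
      also have "\<dots> \<le> 0" using val by (simp add: mult_nonneg_nonpos)
      finally show ?thesis .
    qed
    have UN0: "U \<inter> N = {0}"
    proof
      show "U \<inter> N \<subseteq> {0}"
      proof
        fix z assume z: "z \<in> U \<inter> N"
        show "z \<in> {0}"
        proof (rule ccontr)
          assume "z \<notin> {0}"
          then have "Q z > 0" using U(3) z by simp
          moreover have "Q z \<le> 0" using Qneg z by simp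
          ultimately show False by simp
        qed
      qed
      show "{0} \<subseteq> U \<inter> N" using U(1) sN by (simp add: subspace_0)
    qed
    have "dim {a + b |a b. a \<in> U \<and> b \<in> N} + dim (U \<inter> N) = dim U + dim N"
      by (rule dim_sums_Int[OF U(1) sN])
    then have "dim {a + b |a b. a \<in> U \<and> b \<in> N} = n + 1" using UN0 U(4) dN kn by simp
    moreover have sub: "{a + b |a b. a \<in> U \<and> b \<in> N} \<subseteq> L1" using US1 NL1 sub1 by (auto intro: subspace_add)
    ultimately have "n + 1 \<le> dim L1" using dim_subset[OF sub] by simp
    then show False using dL1 by simp
  qed
  have claimB: "L2 \<inter> L3 \<subseteq> {0}"
  proof
    fix d assume d: "d \<in> L2 \<inter> L3"
    show "d \<in> {0}"
    proof (rule ccontr)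
      assume "d \<notin> {0}"
      then have dn: "d \<notin> L1" using d L13 by blast
      then obtain x0 where x0: "x0 \<in> L1" "\<omega> d x0 \<noteq> 0" using lag_max[OF lag1, of d] by blast
      define S' where "S' = {x \<in> L1. \<omega> x d = 0}"
      have sS': "subspace S'" unfolding S'_def subspace_def using sub1
        by (auto simp: subspace_0 subspace_add subspace_scale bb.add_left bb.scaleR_left bb.zero_left)
      have SS': "S \<subseteq> S'"
      proof
        fix x assume "x \<in> S"
        then obtain a b where "x \<in> L1" "a \<in> L2" "b \<in> L3" "x = a + b" unfolding S_def set_plus_def by auto
        then show "x \<in> S'" unfolding S'_def using lag_iso[OF lag2 _ , of a d] lag_iso[OF lag3 _, of b d] d
          by (simp add: bb.add_left)
      qed
      have "x0 \<notin> S'" unfolding S'_def using x0 skew[of x0 d] by auto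
      then have psub: "S' \<subset> L1" using x0(1) unfolding S'_def by auto
      have e1: "span S' = S'" using sS' by (simp add: span_eq_iff)
      have e2: "span L1 = L1" using sub1 by (simp add: span_eq_iff)
      have "span S' \<subset> span L1" unfolding e1 e2 by (rule psub)
      then have dS': "dim S' < n" using dim_psubset[of S' L1] dL1 by simp
      have KS': "K \<subseteq> S'"
      proof
        fix z assume z: "z \<in> K"
        have "z + 0 \<in> L2 + L3" using z sub3 unfolding K_def by (intro set_plus_intro) (auto simp: subspace_0)
        then have "z \<in> S" using z unfolding S_def K_def by simp
        then show "z \<in> S'" using SS' by blast
      qed
      have UK0: "U \<inter> K = {0}"
      proof
        show "U \<inter> K \<subseteq> {0}"
        proof
          fix z assume z: "z \<in> U \<inter> K"
          have "Q z = \<omega> z 0" unfolding Q_def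
            by (rule Qval) (use z sub3 in \<open>auto simp: K_def subspace_0\<close>)
          then have "Q z = 0" by (simp add: bb.zero_right)
          then show "z \<in> {0}" using U(3) z by force
        qed
        show "{0} \<subseteq> U \<inter> K" using U(1) sK by (simp add: subspace_0)
      qed
      have "dim {a + b |a b. a \<in> U \<and> b \<in> K} + dim (U \<inter> K) = dim U + dim K"
        by (rule dim_sums_Int[OF U(1) sK])
      then have "dim {a + b |a b. a \<in> U \<and> b \<in> K} = n" using UK0 U(4) kn unfolding k_def by simp
      moreover have "{a + b |a b. a \<in> U \<and> b \<in> K} \<subseteq> S'" using U(2) SS' KS' sS' by (auto intro: subspace_add)
      ultimately have "n \<le> dim S'" using dim_subset[OF \<open>{a + b |a b. a \<in> U \<and> b \<in> K} \<subseteq> S'\<close>] by simp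
      then show False using dS' by simp
    qed
  qed
  show ?thesis unfolding P_def psi0
  proof (intro ballI impI)
    fix x y m assume x: "x \<in> L1" and y: "y \<in> L2" and m: "m \<in> L3"
      and e: "id y = id x + m" and val: "\<omega> m (id x) \<le> 0"
    have "x \<in> K" using claimA[OF x y m] e val by simp
    then have xL2: "x \<in> L2" unfolding K_def by simp
    have "m = y - x" using e by simp
    then have "m \<in> L2" using subspace_diff[OF sub2 y xL2] by simp
    then show "m = 0" using claimB m by blast
  qed
qed

lemma all_P:
  assumes plus: "plus_curve \<omega> L3 {0..T} (\<lambda>t. \<psi> t ` L2)"
    and idx: "triple_index \<omega> L1 L2 L3 = n - dim (L1 \<inter> L2)"
  shows "\<forall>t\<in>{0..T}. P t"
proof -
  have P0': "P 0" by (rule P0[OF idx])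
  define S where "S = {t \<in> {0..T}. \<forall>r\<in>{0..t}. P r}"
  have S0: "0 \<in> S" unfolding S_def using P0' T0 by auto
  have bdd: "bdd_above S" unfolding S_def by (auto intro!: bdd_aboveI[of _ T])
  define s where "s = Sup S"
  have s0: "0 \<le> s" unfolding s_def using cSup_upper[OF S0 bdd] .
  have sT: "s \<le> T" unfolding s_def using S0 by (intro cSup_least) (auto simp: S_def)
  have sI: "s \<in> {0..T}" using s0 sT by simp
  have below: "P r" if r0: "0 \<le> r" and rs: "r < s" for r
  proof -
    obtain x where "x \<in> S" "r < x" using less_cSup_iff[of S r] S0 bdd rs unfolding s_def by blast
    then show ?thesis using r0 unfolding S_def by auto
  qed
  have Ps: "P s"
  proof (cases "s = 0")
    case True then show ?thesis using P0' by simp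
  next
    case False
    then have "0 < s" using s0 by simp
    then show ?thesis using P_left[OF sI _ _ plus] below by auto
  qed
  have sTeq: "s = T"
  proof (rule ccontr)
    assume "s \<noteq> T"
    then have sT': "s < T" using sT by simp
    obtain d where d: "d > 0" "\<forall>x\<in>{0..T}. x \<noteq> s \<and> dist x s < d \<longrightarrow> P x"
      using P_open[OF sI Ps] unfolding eventually_at by blast
    define t1 where "t1 = min T (s + d / 2)"
    have t1s: "s < t1" unfolding t1_def using sT' d(1) by simp
    have "t1 \<in> S" unfolding S_def
    proof (intro CollectI conjI ballI)
      show "t1 \<in> {0..T}" using t1s s0 unfolding t1_def by auto
      fix r assume r: "r \<in> {0..t1}"
      show "P r"
      proof (cases "r < s")
        case True then show ?thesis using below r by auto
      next
        case False
        show ?thesis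
        proof (cases "r = s")
          case True then show ?thesis using Ps by simp
        next
          case False
          then have "s < r" using \<open>\<not> r < s\<close> by simp
          moreover have "r \<le> s + d / 2" "r \<le> T" using r unfolding t1_def by auto
          ultimately show ?thesis using d(1) d(2)[rule_format, of r] s0 by (auto simp: dist_real_def)
        qed
      qed
    qed
    then have "t1 \<le> s" unfolding s_def by (rule cSup_upper[OF _ bdd])
    then show False using t1s by simp
  qed
  show ?thesis
  proof
    fix t assume t: "t \<in> {0..T}"
    show "P t"
    proof (cases "t < s")
      case True then show ?thesis using below t by auto
    next
      case False then have "t = s" using t sTeq by auto
      then show ?thesis using Ps by simp
    qed
  qed
qed

end

theorem corollary4p3:
  fixes \<omega> :: "'v::euclidean_space \<Rightarrow> 'v \<Rightarrow> real"
    and n :: nat and T :: real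
    and L1 L2 L3 :: "'v set"
    and \<psi> :: "real \<Rightarrow> 'v \<Rightarrow> 'v"
  assumes symp: "symplectic_form \<omega>"
    and dimV: "DIM('v) = 2 * n"
    and lag1: "lagrangian \<omega> L1" and lag2: "lagrangian \<omega> L2" and lag3: "lagrangian \<omega> L3"
    and psi_sp: "\<forall>t\<in>{0..T}. symplectic_map \<omega> (\<psi> t)"
    and psi_C1: "C1_path_on {0..T} \<psi>"
    and psi0: "\<psi> 0 = id"
    and plus: "plus_curve \<omega> L3 {0..T} (\<lambda>t. \<psi> t ` L2)"
    and idx: "triple_index \<omega> L1 L2 L3 = n - dim (L1 \<inter> L2)"
    and transv: "\<forall>t\<in>{0..T}. \<psi> t ` L1 \<inter> L3 = {0}"
  shows "\<forall>t\<in>{0..T}. \<psi> t ` L2 \<inter> L3 = {0}"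
proof (cases "0 \<le> T")
  case False
  then show ?thesis by simp
next
  case True
  interpret c: csetup \<omega> n T L1 L2 L3 \<psi>
    using assms True by unfold_locales
  show ?thesis using c.all_P[OF plus idx] c.P_concl by blast
qed


end
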